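(* Let $0<c<1$ and $0<d<1$ be irrational numbers, and let $f(n)=[c(n+1)]-[cn]$ and $g(n)=[d(n+1)]-[dn]$. Then for every nonnegative integer $k$ and every real $t\ge0$, $$\sum_{n\le t} f(n)\,g([cn]+k+1)=[d([c([t]+1)]+k+1)]-[d(k+1)],$$ where the sum is over positive integers $n\le t$.
   Context: $[x]$ is the greatest integer not exceeding $x$. *)

theory Defs
  imports Complex_Main
begin

definition jump :: "real \<Rightarrow> int \<Rightarrow> int" where
  "jump c n = \<lfloor>c * (of_int n + 1)\<rfloor> - \<lfloor>c * of_int n\<rfloor>"

end

theory Submission
  imports Defs
begin

lemma jump01:
  assumes "0 < c" "c < 1"
  shows "jump c n = 0 \<or> jump c n = 1"
proof -
  have "\<lfloor>c * of_int n\<rfloor> \<le> \<lfloor>c * (of_int n + 1)\<rfloor>"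
    using assms by (intro floor_mono) (simp add: algebra_simps)
  moreover have "\<lfloor>c * (of_int n + 1)\<rfloor> \<le> \<lfloor>c * of_int n\<rfloor> + 1"
  proof -
    have "c * (of_int n + 1) \<le> c * of_int n + 1" using assms by (simp add: algebra_simps)
    hence "\<lfloor>c * (of_int n + 1)\<rfloor> \<le> \<lfloor>c * of_int n + 1\<rfloor>" by (rule floor_mono)
    thus ?thesis by simp
  qed
  ultimately show ?thesis unfolding jump_def by linarith
qed

lemma term_eq:
  assumes "0 < c" "c < 1"
  shows "jump c n * jump d (\<lfloor>c * of_int n\<rfloor> + int k + 1)
    = \<lfloor>d * (of_int \<lfloor>c * (of_int n + 1)\<rfloor> + real k + 1)\<rfloor> - \<lfloor>d * (of_int \<lfloor>c * of_int n\<rfloor> + real k + 1)\<rfloor>"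
proof (cases "jump c n = 0")
  case True
  then have "\<lfloor>c * (of_int n + 1)\<rfloor> = \<lfloor>c * of_int n\<rfloor>" unfolding jump_def by simp
  then show ?thesis using True by simp
next
  case False
  then have J: "jump c n = 1" using jump01[OF assms] by blast
  then have e: "\<lfloor>c * (of_int n + 1)\<rfloor> = \<lfloor>c * of_int n\<rfloor> + 1" unfolding jump_def by simp
  show ?thesis using J unfolding e jump_def by (simp add: algebra_simps)
qed

lemma main_nat:
  assumes "0 < c" "c < 1"
  shows "(\<Sum>n\<in>{1..int m}. jump c n * jump d (\<lfloor>c * of_int n\<rfloor> + int k + 1))
         = \<lfloor>d * (of_int \<lfloor>c * (of_int (int m) + 1)\<rfloor> + real k + 1)\<rfloor> - \<lfloor>d * (real k + 1)\<rfloor>"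
proof (induction m)
  case 0
  have "\<lfloor>c\<rfloor> = 0" using assms by (simp add: floor_eq_iff)
  then show ?case by simp
next
  case (Suc m)
  have s: "{1..int (Suc m)} = insert (int m + 1) {1..int m}" by auto
  have "(\<Sum>n\<in>{1..int (Suc m)}. jump c n * jump d (\<lfloor>c * of_int n\<rfloor> + int k + 1))
      = jump c (int m + 1) * jump d (\<lfloor>c * of_int (int m + 1)\<rfloor> + int k + 1)
        + (\<Sum>n\<in>{1..int m}. jump c n * jump d (\<lfloor>c * of_int n\<rfloor> + int k + 1))"
    unfolding s by (subst sum.insert) auto
  also have "\<dots> = \<lfloor>d * (of_int \<lfloor>c * (of_int (int m + 1) + 1)\<rfloor> + real k + 1)\<rfloor> - \<lfloor>d * (real k + 1)\<rfloor>"
    using Suc.IH term_eq[OF assms, of "int m + 1" d k] by simp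
  finally show ?case by (simp add: add.commute)
qed

theorem lemma8:
  fixes c d t :: real and k :: nat
  assumes "0 < c" "c < 1" "c \<notin> \<rat>"
    and "0 < d" "d < 1" "d \<notin> \<rat>"
    and "t \<ge> 0"
  shows "(\<Sum>n\<in>{1..\<lfloor>t\<rfloor>}. jump c n * jump d (\<lfloor>c * of_int n\<rfloor> + int k + 1))
         = \<lfloor>d * (of_int \<lfloor>c * (of_int \<lfloor>t\<rfloor> + 1)\<rfloor> + real k + 1)\<rfloor> - \<lfloor>d * (real k + 1)\<rfloor>"
proof -
  have e: "int (nat \<lfloor>t\<rfloor>) = \<lfloor>t\<rfloor>" using assms(7) by simp
  show ?thesis using main_nat[OF assms(1,2), where m="nat \<lfloor>t\<rfloor>" and d=d and k=k] unfolding e .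
qed

end
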